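(* There exist infinitely many connected graphs $G$, with list-assignments $L$ in which $|L(w)|=\deg(w)$ for one vertex $w$ and $|L(v)|\ge\deg(v)+1$ for all other vertices $v$, such that the number of non-singleton connected components of $\mathcal{C}(G,L)$ is exponential in $|V(G)|$ (i.e. at least $c^{|V(G)|}$ for some constant $c>1$).
   Context: A list-assignment $L$ assigns to each vertex $v$ a finite set $L(v)\subseteq\mathbb{N}$; an $L$-colouring is a proper colouring $\varphi$ with $\varphi(v)\in L(v)$ for all $v$. $\mathcal{C}(G,L)$ is the graph whose vertices are the $L$-colourings of $G$, two being adjacent if one is obtained from the other by changing the colour of a single vertex (to another colour in its list, the result being proper). *)

theory Defs
  imports Complex_Main "HOL-Library.FuncSet"
begin

definition simple_graph :: "'a set \<Rightarrow> ('a \<Rightarrow> 'a \<Rightarrow> bool) \<Rightarrow> bool" where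
  "simple_graph V E \<longleftrightarrow> finite V \<and> (\<forall>u v. E u v \<longrightarrow> u \<in> V \<and> v \<in> V) \<and>
     (\<forall>u v. E u v \<longrightarrow> E v u) \<and> (\<forall>v. \<not> E v v)"

definition connected_graph :: "'a set \<Rightarrow> ('a \<Rightarrow> 'a \<Rightarrow> bool) \<Rightarrow> bool" where
  "connected_graph V E \<longleftrightarrow> V \<noteq> {} \<and> (\<forall>u\<in>V. \<forall>v\<in>V. E\<^sup>*\<^sup>* u v)"

definition degree :: "'a set \<Rightarrow> ('a \<Rightarrow> 'a \<Rightarrow> bool) \<Rightarrow> 'a \<Rightarrow> nat" where
  "degree V E v = card {u\<in>V. E v u}"

text \<open>L-colourings: proper colourings with colours from the lists; functions are
taken extensional (undefined outside V) so that each colouring is represented once.\<close>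
definition L_colourings :: "'a set \<Rightarrow> ('a \<Rightarrow> 'a \<Rightarrow> bool) \<Rightarrow> ('a \<Rightarrow> nat set) \<Rightarrow> ('a \<Rightarrow> nat) set" where
  "L_colourings V E L = {\<phi> \<in> (\<Pi>\<^sub>E v\<in>V. L v). \<forall>u v. E u v \<longrightarrow> \<phi> u \<noteq> \<phi> v}"

definition recol_adj :: "'a set \<Rightarrow> ('a \<Rightarrow> 'a \<Rightarrow> bool) \<Rightarrow> ('a \<Rightarrow> nat set) \<Rightarrow> ('a \<Rightarrow> nat) \<Rightarrow> ('a \<Rightarrow> nat) \<Rightarrow> bool" where
  "recol_adj V E L \<phi> \<psi> \<longleftrightarrow> \<phi> \<in> L_colourings V E L \<and> \<psi> \<in> L_colourings V E L \<and>
     (\<exists>v\<in>V. \<phi> v \<noteq> \<psi> v \<and> (\<forall>u\<in>V. u \<noteq> v \<longrightarrow> \<phi> u = \<psi> u))"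

definition recol_components :: "'a set \<Rightarrow> ('a \<Rightarrow> 'a \<Rightarrow> bool) \<Rightarrow> ('a \<Rightarrow> nat set) \<Rightarrow> ('a \<Rightarrow> nat) set set" where
  "recol_components V E L =
     (\<lambda>\<phi>. {\<psi> \<in> L_colourings V E L. (recol_adj V E L)\<^sup>*\<^sup>* \<phi> \<psi>}) ` L_colourings V E L"

definition nonsingleton_components :: "'a set \<Rightarrow> ('a \<Rightarrow> 'a \<Rightarrow> bool) \<Rightarrow> ('a \<Rightarrow> nat set) \<Rightarrow> ('a \<Rightarrow> nat) set set" where
  "nonsingleton_components V E L = {C \<in> recol_components V E L. \<exists>\<phi>\<in>C. \<exists>\<psi>\<in>C. \<phi> \<noteq> \<psi>}"

end

theory Submission imports Defs begin

definition pp :: "nat \<Rightarrow> nat" where "pp v = (if even v then v + 1 else v - 1)"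
definition Vk :: "nat \<Rightarrow> nat set" where "Vk k = {..<2*k+2}"
definition Ek :: "nat \<Rightarrow> nat \<Rightarrow> nat \<Rightarrow> bool" where
  "Ek k u v \<longleftrightarrow> u \<in> Vk k \<and> v \<in> Vk k \<and> u \<noteq> v \<and> (u = 0 \<or> v = 0 \<or> (2 \<le> u \<and> 2 \<le> v \<and> v = pp u))"
definition Lk :: "nat \<Rightarrow> nat \<Rightarrow> nat set" where
  "Lk k v = (if v = 0 then insert 0 {2..<2*k+2} else if v = 1 then {1, 2*k+2} else {0, v, pp v})"

lemma pp_ne[simp]: "pp v \<noteq> v" unfolding pp_def by presburger
lemma pp_pp[simp]: "pp (pp v) = v" by (simp add: pp_def)
lemma pp_ge2: "2 \<le> v \<Longrightarrow> 2 \<le> pp v" unfolding pp_def by presburger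
lemma pp_V: "v \<in> Vk k \<Longrightarrow> pp v \<in> Vk k" unfolding pp_def Vk_def by simp presburger
lemma pp_div: "pp v div 2 = v div 2" by (auto simp: pp_def elim!: oddE)
lemma pp_sym: "(v = pp u) = (u = pp v)" by (metis pp_pp)

lemma simple: "simple_graph (Vk k) (Ek k)"
  unfolding simple_graph_def Ek_def by (auto simp: Vk_def pp_sym intro: pp_ge2)

lemma conn: "connected_graph (Vk k) (Ek k)"
  unfolding connected_graph_def
proof (intro conjI ballI)
  show "Vk k \<noteq> {}" by (auto simp: Vk_def)
  fix u v assume u: "u \<in> Vk k" and v: "v \<in> Vk k"
  have 0: "0 \<in> Vk k" by (simp add: Vk_def)
  have a: "(Ek k)\<^sup>*\<^sup>* u 0"
    by (cases "u = 0") (auto simp: Ek_def u 0 intro!: r_into_rtranclp)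
  have b: "(Ek k)\<^sup>*\<^sup>* 0 v"
    by (cases "v = 0") (auto simp: Ek_def v 0 intro!: r_into_rtranclp)
  show "(Ek k)\<^sup>*\<^sup>* u v" using a b by simp
qed

lemma deg0: "degree (Vk k) (Ek k) 0 = 2*k+1"
proof -
  have "{u\<in>Vk k. Ek k 0 u} = Vk k - {0}" by (auto simp: Ek_def Vk_def)
  then show ?thesis by (simp add: degree_def Vk_def)
qed

lemma deg1: "degree (Vk k) (Ek k) 1 = 1"
proof -
  have "{u\<in>Vk k. Ek k 1 u} = {0}" by (auto simp: Ek_def Vk_def)
  then show ?thesis by (simp add: degree_def)
qed

lemma deg2: "v \<in> Vk k \<Longrightarrow> 2 \<le> v \<Longrightarrow> degree (Vk k) (Ek k) v = 2"
proof -
  assume v: "v \<in> Vk k" "2 \<le> v"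
  have "{u\<in>Vk k. Ek k v u} = {0, pp v}" using v pp_V[OF v(1)] pp_ge2[OF v(2)]
    by (auto simp: Ek_def Vk_def dest: sym[of v "pp v"])
  then show ?thesis using pp_ge2[OF v(2)] pp_ne[of v] by (simp add: degree_def)
qed

lemma cardL0: "card (Lk k 0) = 2*k+1" by (simp add: Lk_def)
lemma cardL1: "card (Lk k 1) = 2" by (simp add: Lk_def)
lemma cardL2: "2 \<le> v \<Longrightarrow> card (Lk k v) = 3"
  using pp_ge2[of v] pp_ne[of v] by (simp add: Lk_def card_insert_if) (metis pp_ne)
lemma finL: "finite (Lk k v)" by (simp add: Lk_def)


definition phi :: "nat \<Rightarrow> nat set \<Rightarrow> nat \<Rightarrow> nat" where
  "phi k S = restrict (\<lambda>v. if v = 0 then 0 else if v = 1 then 1 else if v div 2 - 1 \<in> S then v else pp v) (Vk k)"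

abbreviation "LC k \<equiv> L_colourings (Vk k) (Ek k) (Lk k)"
abbreviation "RA k \<equiv> recol_adj (Vk k) (Ek k) (Lk k)"

lemma V01[simp]: "0 \<in> Vk k" "1 \<in> Vk k" "Suc 0 \<in> Vk k" by (auto simp: Vk_def)

lemma phi0: "phi k S 0 = 0" and phi1: "phi k S 1 = 1" by (auto simp: phi_def V01)

lemma phi2: "v \<in> Vk k \<Longrightarrow> 2 \<le> v \<Longrightarrow> phi k S v = (if v div 2 - 1 \<in> S then v else pp v)"
  by (simp add: phi_def)

lemma phi_pp: "v \<in> Vk k \<Longrightarrow> 2 \<le> v \<Longrightarrow> phi k S (pp v) = pp (phi k S v)"
  using pp_V[of v k] pp_ge2[of v] by (simp add: phi2 pp_div)

lemma phi_in: "v \<in> Vk k \<Longrightarrow> 2 \<le> v \<Longrightarrow> phi k S v \<in> {v, pp v}"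
  by (simp add: phi2)

lemma phi_col: "phi k S \<in> LC k"
proof -
  have "phi k S \<in> (\<Pi>\<^sub>E v\<in>Vk k. Lk k v)"
  proof (rule PiE_I)
    fix v assume v: "v \<in> Vk k"
    show "phi k S v \<in> Lk k v"
    proof (cases "v \<le> 1")
      case True
      then have "v = 0 \<or> v = 1" by auto
      then show ?thesis using phi0 phi1 by (auto simp: Lk_def)
    next
      case False then show ?thesis using phi_in[OF v, of S] by (auto simp: Lk_def)
    qed
  next
    fix v assume "v \<notin> Vk k" then show "phi k S v = undefined" by (simp add: phi_def)
  qed
  moreover have "phi k S u \<noteq> phi k S v" if e: "Ek k u v" for u v
  proof -
    have u: "u \<in> Vk k" and v: "v \<in> Vk k" and ne: "u \<noteq> v" using e by (auto simp: Ek_def)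
    have nz: "x \<in> Vk k \<Longrightarrow> x \<noteq> 0 \<Longrightarrow> phi k S x \<noteq> 0" for x
      using phi1 phi_in[of x k S] pp_ge2[of x] by (cases "x = 1") auto
    show ?thesis
    proof (cases "u = 0 \<or> v = 0")
      case True then show ?thesis using nz u v ne phi0 by metis
    next
      case False
      then have "2 \<le> u" "2 \<le> v" "v = pp u" using e by (auto simp: Ek_def)
      then show ?thesis using phi_pp[OF u] by (metis pp_ne)
    qed
  qed
  ultimately show ?thesis by (simp add: L_colourings_def)
qed

lemma inv:
  assumes "(RA k)\<^sup>*\<^sup>* (phi k S) \<psi>"
  shows "\<psi> \<in> LC k \<and> (\<forall>v\<in>Vk k. v \<noteq> 1 \<longrightarrow> \<psi> v = phi k S v)"
  using assms
proof (induction rule: rtranclp_induct)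
  case base then show ?case using phi_col by simp
next
  case (step \<psi> \<psi>')
  have c': "\<psi>' \<in> LC k" using step.hyps(2) by (simp add: recol_adj_def)
  then have pr: "Ek k a b \<Longrightarrow> \<psi>' a \<noteq> \<psi>' b" for a b by (simp add: L_colourings_def)
  have inL: "a \<in> Vk k \<Longrightarrow> \<psi>' a \<in> Lk k a" for a using c' by (auto simp: L_colourings_def)
  obtain x where x: "x \<in> Vk k" "\<psi> x \<noteq> \<psi>' x" "\<forall>u\<in>Vk k. u \<noteq> x \<longrightarrow> \<psi> u = \<psi>' u"
    using step.hyps(2) by (auto simp: recol_adj_def)
  have IH: "\<forall>v\<in>Vk k. v \<noteq> 1 \<longrightarrow> \<psi> v = phi k S v" using step.IH by simp
  have agree: "u \<in> Vk k \<Longrightarrow> u \<noteq> x \<Longrightarrow> u \<noteq> 1 \<Longrightarrow> \<psi>' u = phi k S u" for u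
    using x IH by metis
  have "x = 1"
  proof (rule ccontr)
    assume x1: "x \<noteq> 1"
    show False
    proof (cases "x = 0")
      case True
      have "\<psi>' 0 \<in> Lk k 0" using inL V01 by simp
      moreover have "\<psi>' 0 \<noteq> 0"
      proof -
        have "\<psi> 0 = 0" using IH phi0[of k S] V01(1)[of k] by simp
        then show ?thesis using x(2) True by simp
      qed
      ultimately have cV: "\<psi>' 0 \<in> Vk k" "2 \<le> \<psi>' 0" by (auto simp: Lk_def Vk_def)
      define c where "c = \<psi>' 0"
      define u where "u = (if c div 2 - 1 \<in> S then c else pp c)"
      have uV: "u \<in> Vk k" "2 \<le> u" using cV pp_V pp_ge2 by (auto simp: u_def c_def)
      have "phi k S u = c" using uV cV pp_div[of c] by (auto simp: u_def c_def phi2)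
      then have "\<psi>' u = c" using agree[OF uV(1)] uV True by auto
      moreover have "Ek k 0 u" using uV V01 by (auto simp: Ek_def)
      ultimately show False using pr c_def by metis
    next
      case False
      then have x2: "2 \<le> x" using x1 by simp
      have "\<psi>' 0 = 0" using agree[of 0] V01 False phi0 by simp
      moreover have "Ek k x 0" using x2 x V01 by (auto simp: Ek_def)
      ultimately have n0: "\<psi>' x \<noteq> 0" using pr by metis
      have ppx: "pp x \<in> Vk k" "2 \<le> pp x" "pp x \<noteq> x" using pp_V[OF x(1)] pp_ge2[OF x2] by auto
      have "\<psi>' (pp x) = pp (phi k S x)" using agree[OF ppx(1) ppx(3)] ppx(2) phi_pp[OF x(1) x2] by simp
      moreover have "\<psi>' x \<noteq> phi k S x" using x(2) IH x(1) x1 by simp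
      moreover have "\<psi>' x \<in> {x, pp x}" using inL[OF x(1)] n0 x2 by (auto simp: Lk_def)
      moreover have "phi k S x \<in> {x, pp x}" using phi_in[OF x(1) x2] .
      ultimately have "\<psi>' (pp x) = \<psi>' x" by auto
      moreover have "Ek k x (pp x)" using x ppx x2 by (auto simp: Ek_def)
      ultimately show False using pr by metis
    qed
  qed
  then show ?case using c' agree by simp
qed


definition comp :: "nat \<Rightarrow> nat set \<Rightarrow> (nat \<Rightarrow> nat) set" where
  "comp k S = {\<psi> \<in> LC k. (RA k)\<^sup>*\<^sup>* (phi k S) \<psi>}"

lemma flip_adj: "RA k (phi k S) ((phi k S)(1 := 2*k+2))"
proof -
  have c: "phi k S \<in> LC k" by (rule phi_col)
  have cc: "phi k S \<in> (\<Pi>\<^sub>E v\<in>Vk k. Lk k v)" using c by (simp add: L_colourings_def)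
  have "(phi k S)(1 := 2*k+2) \<in> (\<Pi>\<^sub>E v\<in>Vk k. Lk k v)"
  proof (rule PiE_I)
    fix v assume v: "v \<in> Vk k"
    show "((phi k S)(1 := 2*k+2)) v \<in> Lk k v"
    proof (cases "v = 1")
      case True then show ?thesis by (simp add: Lk_def)
    next
      case False then show ?thesis using cc v by auto
    qed
  next
    fix v assume v: "v \<notin> Vk k"
    then have "v \<noteq> 1" by auto
    then show "((phi k S)(1 := 2*k+2)) v = undefined" using cc v by auto
  qed
  moreover have "((phi k S)(1 := 2*k+2)) u \<noteq> ((phi k S)(1 := 2*k+2)) v" if e: "Ek k u v" for u v
  proof -
    have "phi k S u \<noteq> phi k S v" using c e by (simp add: L_colourings_def)
    moreover have "u = 1 \<Longrightarrow> v = 0" "v = 1 \<Longrightarrow> u = 0" using e by (auto simp: Ek_def)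
    ultimately show ?thesis using phi0[of k S] by auto
  qed
  ultimately have "(phi k S)(1 := 2*k+2) \<in> LC k" by (simp add: L_colourings_def)
  moreover have "\<forall>u\<in>Vk k. u \<noteq> 1 \<longrightarrow> phi k S u = ((phi k S)(1 := 2*k+2)) u" by simp
  moreover have "phi k S 1 \<noteq> ((phi k S)(1 := 2*k+2)) 1" using phi1[of k S] by simp
  ultimately show ?thesis using c V01(2)[of k] unfolding recol_adj_def by blast
qed

lemma comp_ns: "comp k S \<in> nonsingleton_components (Vk k) (Ek k) (Lk k)"
proof -
  have "comp k S \<in> recol_components (Vk k) (Ek k) (Lk k)"
    unfolding recol_components_def comp_def using phi_col by blast
  moreover have "phi k S \<in> comp k S" using phi_col by (simp add: comp_def)
  moreover have "(phi k S)(1 := 2*k+2) \<in> comp k S"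
  proof -
    have a: "RA k (phi k S) ((phi k S)(1 := 2*k+2))" by (rule flip_adj)
    then have "(phi k S)(1 := 2*k+2) \<in> LC k" by (simp add: recol_adj_def)
    then show ?thesis using r_into_rtranclp[of "RA k", OF a] by (simp add: comp_def)
  qed
  moreover have "phi k S \<noteq> (phi k S)(1 := 2*k+2)"
  proof
    assume "phi k S = (phi k S)(1 := 2*k+2)"
    then have "phi k S 1 = 2*k+2" by (metis fun_upd_same)
    then show False using phi1[of k S] by simp
  qed
  ultimately show ?thesis unfolding nonsingleton_components_def by blast
qed

lemma comp_inj: "inj_on (comp k) (Pow {..<k})"
proof (rule inj_onI)
  fix S T assume S: "S \<in> Pow {..<k}" and T: "T \<in> Pow {..<k}" and eq: "comp k S = comp k T"
  have "phi k T \<in> comp k T" using phi_col by (simp add: comp_def)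
  then have "phi k T \<in> comp k S" using eq by simp
  then have "(RA k)\<^sup>*\<^sup>* (phi k S) (phi k T)" by (simp add: comp_def)
  then have ag: "\<forall>v\<in>Vk k. v \<noteq> 1 \<longrightarrow> phi k T v = phi k S v" using inv by blast
  have "i \<in> S \<longleftrightarrow> i \<in> T" if i: "i < k" for i
  proof -
    have v: "2*i+2 \<in> Vk k" "2 \<le> 2*i+2" "2*i+2 \<noteq> 1" using i by (auto simp: Vk_def)
    have d: "(2*i+2) div 2 - 1 = i" by simp
    have "phi k T (2*i+2) = phi k S (2*i+2)" using ag v by blast
    then show ?thesis using phi2[OF v(1) v(2), of S] phi2[OF v(1) v(2), of T] d
      by (auto split: if_splits simp del: pp_ne) (metis pp_ne)+
  qed
  then show "S = T" using S T by auto
qed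

lemma fin_ns: "finite (nonsingleton_components (Vk k) (Ek k) (Lk k))"
proof -
  have "finite (\<Pi>\<^sub>E v\<in>Vk k. Lk k v)" by (rule finite_PiE) (auto simp: Vk_def finL)
  then have "finite (LC k)" by (rule rev_finite_subset) (auto simp: L_colourings_def)
  then have "finite (Pow (LC k))" by simp
  moreover have "nonsingleton_components (Vk k) (Ek k) (Lk k) \<subseteq> Pow (LC k)"
    by (auto simp: nonsingleton_components_def recol_components_def)
  ultimately show ?thesis by (rule rev_finite_subset)
qed

lemma count: "2^k \<le> card (nonsingleton_components (Vk k) (Ek k) (Lk k))"
proof -
  have "card (comp k ` Pow {..<k}) = card (Pow {..<k::nat})" by (rule card_image[OF comp_inj])
  also have "\<dots> = 2^k" by (simp add: card_Pow)
  finally have c2: "card (comp k ` Pow {..<k}) = 2^k" .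
  have "comp k ` Pow {..<k} \<subseteq> nonsingleton_components (Vk k) (Ek k) (Lk k)"
    using comp_ns by blast
  from card_mono[OF fin_ns this] show ?thesis using c2 by simp
qed

lemma ineq: "1 \<le> k \<Longrightarrow> (9/8::real)^(2*k+2) \<le> 2^k"
proof (induction k rule: dec_induct)
  case base then show ?case by (simp add: eval_nat_numeral)
next
  case (step n)
  have "(9/8::real)^(2*Suc n+2) = (81/64) * (9/8)^(2*n+2)" by (simp add: power_add power_mult)
  also have "\<dots> \<le> 2 * (9/8)^(2*n+2)" by simp
  also have "\<dots> \<le> 2 * 2^n" using step.IH by simp
  finally show ?case by simp
qed

theorem mainTheorem3:
  "\<exists>c::real. c > 1 \<and>
     (\<forall>N::nat. \<exists>(V::nat set) E L w.
        card V \<ge> N \<and> simple_graph V E \<and> connected_graph V E \<and>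
        w \<in> V \<and> (\<forall>v\<in>V. finite (L v)) \<and>
        card (L w) = degree V E w \<and>
        (\<forall>v\<in>V. v \<noteq> w \<longrightarrow> card (L v) \<ge> degree V E v + 1) \<and>
        real (card (nonsingleton_components V E L)) \<ge> c ^ card V)"
proof (intro exI[of _ "9/8"] conjI allI)
  fix N :: nat
  define k where "k = N + 1"
  have cV: "card (Vk k) = 2*k+2" by (simp add: Vk_def)
  have lst: "\<forall>v\<in>Vk k. v \<noteq> 0 \<longrightarrow> card (Lk k v) \<ge> degree (Vk k) (Ek k) v + 1"
  proof (intro ballI impI)
    fix v assume v: "v \<in> Vk k" "v \<noteq> 0"
    show "card (Lk k v) \<ge> degree (Vk k) (Ek k) v + 1"
    proof (cases "v = 1")
      case True then show ?thesis using cardL1 deg1 by simp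
    next
      case False then have "2 \<le> v" using v by simp
      then show ?thesis using cardL2 deg2 v by simp
    qed
  qed
  have nle: "N \<le> card (Vk k)" using cV k_def by simp
  have eq0: "card (Lk k 0) = degree (Vk k) (Ek k) 0" by (simp add: cardL0 deg0)
  have "(9/8::real)^card (Vk k) \<le> 2^k" using ineq[of k] cV by (simp add: k_def)
  also have "\<dots> \<le> real (card (nonsingleton_components (Vk k) (Ek k) (Lk k)))"
    using count[of k] by (metis of_nat_le_iff of_nat_numeral of_nat_power)
  finally have cnt: "(9/8::real)^card (Vk k) \<le> real (card (nonsingleton_components (Vk k) (Ek k) (Lk k)))" .
  show "\<exists>(V::nat set) E L w.
        card V \<ge> N \<and> simple_graph V E \<and> connected_graph V E \<and>
        w \<in> V \<and> (\<forall>v\<in>V. finite (L v)) \<and>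
        card (L w) = degree V E w \<and>
        (\<forall>v\<in>V. v \<noteq> w \<longrightarrow> card (L v) \<ge> degree V E v + 1) \<and>
        real (card (nonsingleton_components V E L)) \<ge> (9/8) ^ card V"
    apply (rule exI[of _ "Vk k"], rule exI[of _ "Ek k"], rule exI[of _ "Lk k"], rule exI[of _ 0])
    apply (intro conjI)
           apply (rule nle)
          apply (rule simple)
         apply (rule conn)
        apply (rule V01(1))
       apply (simp add: finL)
      apply (rule eq0)
     apply (rule lst)
    apply (rule cnt)
    done
qed simp

end
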